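(* Suppose the set of extreme points of $\mathrm{New}(A)$ is affinely independent, and that $c\in\mathbb{R}^m$ satisfies $c_i\le 0$ whenever $a_i$ is nonextremal. Then $c\in C_{\mathrm{SAGE}}(A)$ if and only if $c\in C_{\mathrm{NNS}}(A)$.
   Context: Let $A\in\mathbb{R}^{n\times m}$ have distinct columns $a_1,\dots,a_m$. For $c\in\mathbb{R}^m$, $\mathrm{Sig}(A,c)$ denotes the function $x\mapsto\sum_{i=1}^m c_i\exp(a_i^\top x)$ on $\mathbb{R}^n$. $\mathrm{New}(A)=\mathrm{conv}\{a_1,\dots,a_m\}$ is the Newton polytope; $a_i$ is called extremal if it is an extreme point of $\mathrm{New}(A)$ and nonextremal otherwise. $C_{\mathrm{NNS}}(A)=\{c\in\mathbb{R}^m:\mathrm{Sig}(A,c)(x)\ge 0\ \forall x\in\mathbb{R}^n\}$. For $k\in[m]$, the $k$-th AGE cone is $C_{\mathrm{AGE}}(A,k)=\{c\in C_{\mathrm{NNS}}(A): c_i\ge 0\ \forall i\ne k\}$, and the SAGE cone is the Minkowski sum $C_{\mathrm{SAGE}}(A)=\sum_{k=1}^m C_{\mathrm{AGE}}(A,k)$. *)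

theory Defs
  imports "HOL-Analysis.Analysis"
begin

text \<open>Columns of A are indexed by the finite type 'm (so m = CARD('m)), and lie in
  R^n = real^'n. A coefficient vector c in R^m is an element of real^'m.\<close>

definition Sig :: "('m::finite \<Rightarrow> real^'n) \<Rightarrow> real^'m \<Rightarrow> real^'n \<Rightarrow> real" where
  "Sig A c x = (\<Sum>i\<in>UNIV. c $ i * exp (A i \<bullet> x))"

definition New :: "('m::finite \<Rightarrow> real^'n) \<Rightarrow> (real^'n) set" where
  "New A = convex hull (range A)"

definition extremal :: "('m::finite \<Rightarrow> real^'n) \<Rightarrow> 'm \<Rightarrow> bool" where
  "extremal A i \<longleftrightarrow> A i extreme_point_of New A"

definition C_NNS :: "('m::finite \<Rightarrow> real^'n) \<Rightarrow> (real^'m) set" where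
  "C_NNS A = {c. \<forall>x. Sig A c x \<ge> 0}"

definition C_AGE :: "('m::finite \<Rightarrow> real^'n) \<Rightarrow> 'm \<Rightarrow> (real^'m) set" where
  "C_AGE A k = {c \<in> C_NNS A. \<forall>i. i \<noteq> k \<longrightarrow> c $ i \<ge> 0}"

definition C_SAGE :: "('m::finite \<Rightarrow> real^'n) \<Rightarrow> (real^'m) set" where
  "C_SAGE A = {c. \<exists>v :: 'm \<Rightarrow> real^'m. (\<forall>k. v k \<in> C_AGE A k) \<and> c = (\<Sum>k\<in>UNIV. v k)}"

end

theory Submission
  imports Defs
begin


lemma linear_functional_inner:
  fixes g :: "'a::euclidean_space \<Rightarrow> real"
  assumes "linear g"
  shows "\<exists>w. \<forall>x. g x = w \<bullet> x"
proof -
  define w where "w = (\<Sum>b\<in>Basis. g b *\<^sub>R b)"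
  have "g x = w \<bullet> x" for x
  proof -
    have "g x = g (\<Sum>b\<in>Basis. (x \<bullet> b) *\<^sub>R b)" by (simp add: euclidean_representation)
    also have "\<dots> = (\<Sum>b\<in>Basis. (x \<bullet> b) * g b)"
      using assms by (simp add: linear_sum linear_scale)
    also have "\<dots> = w \<bullet> x" by (simp add: w_def inner_sum_right inner_commute mult.commute)
    finally show ?thesis .
  qed
  then show ?thesis by blast
qed

lemma surj_affine:
  fixes A :: "'m::finite \<Rightarrow> real^'n" and E :: "'m set"
  assumes "inj A" and indep: "\<not> affine_dependent (A ` E)"
  shows "\<exists>x s. \<forall>j\<in>E. A j \<bullet> x + s = \<tau> j"
proof (cases "E = {}")
  case True then show ?thesis by auto
next
  case False
  then obtain j0 where j0: "j0 \<in> E" by auto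
  have ins: "A ` E = insert (A j0) (A ` (E - {j0}))" using j0 by auto
  have nin: "A j0 \<notin> A ` (E - {j0})" using \<open>inj A\<close> by (auto dest: injD)
  have "\<not> dependent ((\<lambda>x. - A j0 + x) ` (A ` (E - {j0})))"
    using indep affine_dependent_iff_dependent[OF nin] ins by simp
  define B where "B = (\<lambda>x. - A j0 + x) ` (A ` (E - {j0}))"
  define f where "f = (\<lambda>v. \<tau> (SOME j. j \<in> E - {j0} \<and> v = - A j0 + A j) - \<tau> j0)"
  obtain g where g: "linear g" "\<forall>v\<in>B. g v = f v"
    using linear_independent_extend[of B f] \<open>\<not> dependent _\<close> B_def by auto
  obtain w where w: "\<forall>x. g x = w \<bullet> x" using linear_functional_inner[OF g(1)] by blast
  have "A j \<bullet> w + (\<tau> j0 - A j0 \<bullet> w) = \<tau> j" if "j \<in> E" for j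
  proof (cases "j = j0")
    case True then show ?thesis by simp
  next
    case False
    have vB: "- A j0 + A j \<in> B" using that False B_def by auto
    have sel: "(SOME j'. j' \<in> E - {j0} \<and> - A j0 + A j = - A j0 + A j') = j"
      apply (rule some_equality) using that False apply simp
      using \<open>inj A\<close> by (auto dest: injD)
    have "w \<bullet> (- A j0 + A j) = f (- A j0 + A j)"
      using g(2) vB w by metis
    also have "\<dots> = \<tau> j - \<tau> j0" unfolding f_def sel ..
    finally have "w \<bullet> (- A j0 + A j) = \<tau> j - \<tau> j0" .
    then show ?thesis by (simp add: inner_commute inner_diff_right)
  qed
  then show ?thesis by blast
qed



lemma abs_le_exp_sum: "\<bar>x::real\<bar> \<le> exp x + exp (-x)"
proof -
  have "x \<le> exp x" using exp_ge_add_one_self[of x] by linarith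
  moreover have "-x \<le> exp (-x)" using exp_ge_add_one_self[of "-x"] by linarith
  ultimately show ?thesis by (simp add: abs_if add_nonneg_nonneg add_increasing add_increasing2)
qed

lemma crit_exists:
  fixes c :: "real^'m::finite" and l :: "'m \<Rightarrow> 'm \<Rightarrow> real" and \<delta> :: real
  assumes G: "\<forall>\<tau>::real^'m. 0 \<le> (\<Sum>i\<in>UNIV. c$i * exp (\<Sum>j\<in>UNIV. l i j * \<tau>$j))"
    and dpos: "\<delta> > 0"
  shows "\<exists>\<tau>::real^'m. \<forall>j. (\<Sum>i\<in>UNIV. c$i * exp (\<Sum>j'\<in>UNIV. l i j' * \<tau>$j') * l i j)
             + \<delta> * (exp (\<tau>$j) - exp (-\<tau>$j)) = 0"
proof -
  define h where "h \<tau> = (\<Sum>i\<in>UNIV. c$i * exp (\<Sum>j\<in>UNIV. l i j * \<tau>$j))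
      + \<delta> * (\<Sum>j\<in>UNIV. exp (\<tau>$j) + exp (-\<tau>$j))" for \<tau> :: "real^'m"
  have hc: "continuous_on UNIV h" unfolding h_def by (intro continuous_intros)
  define S where "S = {\<tau>. h \<tau> \<le> h 0}"
  have "closed S" unfolding S_def by (rule closed_Collect_le[OF hc]) (intro continuous_intros)
  moreover have "bounded S"
  proof -
    have bnd: "\<bar>\<tau>$j\<bar> \<le> h 0 / \<delta>" if "\<tau> \<in> S" for \<tau> j
    proof -
      have "exp (\<tau>$j) + exp (-\<tau>$j) \<le> (\<Sum>j\<in>UNIV. exp (\<tau>$j) + exp (-\<tau>$j))"
        by (rule member_le_sum) (auto intro: add_nonneg_nonneg)
      then have "\<delta> * \<bar>\<tau>$j\<bar> \<le> \<delta> * (\<Sum>j\<in>UNIV. exp (\<tau>$j) + exp (-\<tau>$j))"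
        using abs_le_exp_sum[of "\<tau>$j"] dpos by (intro mult_left_mono) auto
      also have "\<dots> \<le> h \<tau>" unfolding h_def using G by auto
      also have "\<dots> \<le> h 0" using that S_def by auto
      finally show ?thesis using dpos by (simp add: field_simps)
    qed
    have "norm \<tau> \<le> CARD('m) * (h 0 / \<delta>)" if "\<tau> \<in> S" for \<tau>
    proof -
      have "norm \<tau> \<le> (\<Sum>j\<in>UNIV. \<bar>\<tau>$j\<bar>)" by (rule norm_le_l1_cart)
      also have "\<dots> \<le> (\<Sum>j\<in>(UNIV::'m set). h 0 / \<delta>)" using bnd[OF that]
        by (intro sum_mono) auto
      finally show ?thesis by simp
    qed
    then show ?thesis unfolding bounded_iff by blast
  qed
  ultimately have "compact S" using compact_eq_bounded_closed by blast
  moreover have "S \<noteq> {}" unfolding S_def by auto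
  ultimately obtain t where tS: "t \<in> S" and tmin: "\<forall>y\<in>S. h t \<le> h y"
    using continuous_attains_inf[of S h] continuous_on_subset[OF hc] by blast
  have glob: "h t \<le> h y" for y
  proof (cases "y \<in> S")
    case True then show ?thesis using tmin by auto
  next
    case False then show ?thesis using tS S_def by auto
  qed
  have "(\<Sum>i\<in>UNIV. c$i * exp (\<Sum>j'\<in>UNIV. l i j' * t$j') * l i j)
             + \<delta> * (exp (t$j) - exp (-t$j)) = 0" for j
  proof -
    define L where "L i = (\<Sum>j'\<in>UNIV. l i j' * t$j')" for i
    define R where "R = (\<Sum>j'\<in>UNIV-{j}. exp (t$j') + exp (-t$j'))"
    define \<phi> where "\<phi> s = (\<Sum>i\<in>UNIV. c$i * exp (L i + s * l i j))
        + \<delta> * (R + (exp (t$j + s) + exp (-(t$j + s))))" for s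
    have phi_eq: "\<phi> s = h (t + s *\<^sub>R axis j 1)" for s
    proof -
      have 1: "(\<Sum>j'\<in>UNIV. l i j' * (t + s *\<^sub>R axis j 1)$j') = L i + s * l i j" for i
      proof -
        have "(\<Sum>j'\<in>UNIV. l i j' * (t + s *\<^sub>R axis j 1)$j') =
              (\<Sum>j'\<in>UNIV. l i j' * t$j' + (if j' = j then s * l i j else 0))"
          by (intro sum.cong) (auto simp: axis_def algebra_simps)
        also have "\<dots> = L i + s * l i j" by (simp add: sum.distrib L_def)
        finally show ?thesis .
      qed
      have 2: "(\<Sum>j'\<in>UNIV. exp ((t + s *\<^sub>R axis j 1)$j') + exp (-(t + s *\<^sub>R axis j 1)$j'))
           = R + (exp (t$j + s) + exp (-(t$j + s)))"
        unfolding R_def by (subst sum.remove[of UNIV j]) (auto simp: axis_def intro!: sum.cong)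
      show ?thesis unfolding \<phi>_def h_def 1 2 ..
    qed
    have "(\<phi> has_real_derivative ((\<Sum>i\<in>UNIV. c$i * exp (L i) * l i j)
          + \<delta> * (exp (t$j) - exp (-t$j)))) (at 0)"
      unfolding \<phi>_def by (auto intro!: derivative_eq_intros sum.cong simp: algebra_simps)
    moreover have "\<forall>y. \<bar>0 - y\<bar> < 1 \<longrightarrow> \<phi> 0 \<le> \<phi> y"
      using glob by (simp add: phi_eq)
    ultimately have "(\<Sum>i\<in>UNIV. c$i * exp (L i) * l i j)
          + \<delta> * (exp (t$j) - exp (-t$j)) = 0"
      using DERIV_local_min[of \<phi> _ 0 1] by simp
    then show ?thesis by (simp add: L_def)
  qed
  then show ?thesis by blast
qed



lemma approx_decomp:
  fixes A :: "'m::finite \<Rightarrow> real^'n" and c :: "real^'m" and E :: "'m set"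
    and l :: "'m \<Rightarrow> 'm \<Rightarrow> real" and \<delta> :: real
  assumes lnn: "\<forall>i j. 0 \<le> l i j"
    and lz: "\<forall>i j. j \<notin> E \<longrightarrow> l i j = 0"
    and lsum: "\<forall>i. (\<Sum>j\<in>UNIV. l i j) = 1"
    and lcomb: "\<forall>i. (\<Sum>j\<in>UNIV. l i j *\<^sub>R A j) = A i"
    and lE: "\<forall>i\<in>E. \<forall>j. l i j = (if j = i then 1 else 0)"
    and cN: "\<forall>k. k \<notin> E \<longrightarrow> c$k \<le> 0"
    and G: "\<forall>\<tau>::real^'m. 0 \<le> (\<Sum>i\<in>UNIV. c$i * exp (\<Sum>j\<in>UNIV. l i j * \<tau>$j))"
    and dpos: "\<delta> > 0"
  shows "\<exists>d :: real^'m^'m. (\<forall>j k. 0 \<le> d$j$k) \<and> (\<forall>j k. k \<in> E \<longrightarrow> d$j$k = 0)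
     \<and> (\<forall>j k. j \<notin> E \<longrightarrow> d$j$k = 0) \<and> (\<forall>j\<in>E. (\<Sum>k\<in>UNIV. d$j$k) \<le> c$j + \<delta>)
     \<and> (\<forall>k. k \<notin> E \<longrightarrow> (\<forall>x. 0 \<le> (\<Sum>j\<in>UNIV. d$j$k * exp (A j \<bullet> x)) + c$k * exp (A k \<bullet> x)))"
proof -
  obtain \<tau> :: "real^'m" where crit: "\<forall>j. (\<Sum>i\<in>UNIV. c$i * exp (\<Sum>j'\<in>UNIV. l i j' * \<tau>$j') * l i j)
             + \<delta> * (exp (\<tau>$j) - exp (-\<tau>$j)) = 0"
    using crit_exists[OF G dpos] by blast
  define L where "L i = (\<Sum>j'\<in>UNIV. l i j' * \<tau>$j')" for i
  have LE: "L i = \<tau>$i" if "i \<in> E" for i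
  proof -
    have "l i j = (if j = i then 1 else 0)" for j using lE that by blast
    then have "(\<Sum>j'\<in>UNIV. l i j' * \<tau>$j') = (\<Sum>j'\<in>UNIV. if j' = i then \<tau>$j' else 0)"
      by (intro sum.cong) auto
    then show ?thesis by (simp add: L_def)
  qed
  define d :: "real^'m^'m" where
    "d = (\<chi> j k. if k \<in> E then 0 else - c$k * l k j * exp (L k - \<tau>$j))"
  have d1: "\<forall>j k. 0 \<le> d$j$k"
    using cN lnn by (auto simp: d_def intro!: mult_nonpos_nonneg)
  have d2: "\<forall>j k. k \<in> E \<longrightarrow> d$j$k = 0" by (simp add: d_def)
  have d3: "\<forall>j k. j \<notin> E \<longrightarrow> d$j$k = 0" using lz by (simp add: d_def)
  have d4: "(\<Sum>k\<in>UNIV. d$j$k) \<le> c$j + \<delta>" if jE: "j \<in> E" for j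
  proof -
    have trm: "c$i * exp (L i) * l i j = (if i = j then c$j * exp (\<tau>$j) else 0) - exp (\<tau>$j) * d$j$i" for i
    proof (cases "i \<in> E")
      case True then show ?thesis using lE LE by (auto simp: d_def)
    next
      case False
      then have "i \<noteq> j" using jE by auto
      then show ?thesis using False by (simp add: d_def exp_diff)
    qed
    have "(\<Sum>i\<in>UNIV. c$i * exp (L i) * l i j) = c$j * exp (\<tau>$j) - exp (\<tau>$j) * (\<Sum>k\<in>UNIV. d$j$k)"
      by (simp add: trm sum_subtractf sum_distrib_left)
    with crit[rule_format, of j] have
      "exp (\<tau>$j) * (c$j + \<delta> - (\<Sum>k\<in>UNIV. d$j$k)) = \<delta> * exp (-\<tau>$j)"
      unfolding L_def by (simp add: algebra_simps)
    moreover have "\<delta> * exp (-\<tau>$j) > 0" using dpos by simp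
    ultimately have "exp (\<tau>$j) * (c$j + \<delta> - (\<Sum>k\<in>UNIV. d$j$k)) > 0" by simp
    then show ?thesis by (simp add: zero_less_mult_iff)
  qed
  have d5: "0 \<le> (\<Sum>j\<in>UNIV. d$j$k * exp (A j \<bullet> x)) + c$k * exp (A k \<bullet> x)" if kE: "k \<notin> E" for k x
  proof -
    have lin: "(\<Sum>j\<in>UNIV. l k j * (A j \<bullet> x - \<tau>$j)) = A k \<bullet> x - L k"
    proof -
      have "(\<Sum>j\<in>UNIV. l k j * (A j \<bullet> x)) = (\<Sum>j\<in>UNIV. l k j *\<^sub>R A j) \<bullet> x"
        by (simp add: inner_sum_left)
      then show ?thesis using lcomb by (simp add: right_diff_distrib sum_subtractf L_def)
    qed
    have "exp (\<Sum>j\<in>UNIV. l k j *\<^sub>R (A j \<bullet> x - \<tau>$j)) \<le> (\<Sum>j\<in>UNIV. l k j * exp (A j \<bullet> x - \<tau>$j))"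
      by (rule convex_on_sum[OF _ _ exp_convex]) (use lsum lnn in auto)
    then have jen: "exp (A k \<bullet> x - L k) \<le> (\<Sum>j\<in>UNIV. l k j * exp (A j \<bullet> x - \<tau>$j))"
      using lin by simp
    have "(\<Sum>j\<in>UNIV. d$j$k * exp (A j \<bullet> x)) = (- c$k * exp (L k)) * (\<Sum>j\<in>UNIV. l k j * exp (A j \<bullet> x - \<tau>$j))"
      using kE by (simp add: d_def sum_distrib_left exp_diff algebra_simps)
    also have "\<dots> \<ge> (- c$k * exp (L k)) * exp (A k \<bullet> x - L k)"
      using jen cN kE by (intro mult_left_mono) (auto intro: mult_nonpos_nonneg)
    finally have "(\<Sum>j\<in>UNIV. d$j$k * exp (A j \<bullet> x)) \<ge> - c$k * exp (A k \<bullet> x)"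
      by (simp add: exp_diff)
    then show ?thesis by simp
  qed
  show ?thesis using d1 d2 d3 d4 d5 by blast
qed



lemma exact_decomp:
  fixes A :: "'m::finite \<Rightarrow> real^'n" and c :: "real^'m" and E :: "'m set"
    and l :: "'m \<Rightarrow> 'm \<Rightarrow> real"
  assumes lnn: "\<forall>i j. 0 \<le> l i j"
    and lz: "\<forall>i j. j \<notin> E \<longrightarrow> l i j = 0"
    and lsum: "\<forall>i. (\<Sum>j\<in>UNIV. l i j) = 1"
    and lcomb: "\<forall>i. (\<Sum>j\<in>UNIV. l i j *\<^sub>R A j) = A i"
    and lE: "\<forall>i\<in>E. \<forall>j. l i j = (if j = i then 1 else 0)"
    and cN: "\<forall>k. k \<notin> E \<longrightarrow> c$k \<le> 0"
    and G: "\<forall>\<tau>::real^'m. 0 \<le> (\<Sum>i\<in>UNIV. c$i * exp (\<Sum>j\<in>UNIV. l i j * \<tau>$j))"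
  shows "\<exists>D :: real^'m^'m. (\<forall>j k. 0 \<le> D$j$k) \<and> (\<forall>j k. k \<in> E \<longrightarrow> D$j$k = 0)
     \<and> (\<forall>j k. j \<notin> E \<longrightarrow> D$j$k = 0) \<and> (\<forall>j\<in>E. (\<Sum>k\<in>UNIV. D$j$k) \<le> c$j)
     \<and> (\<forall>k. k \<notin> E \<longrightarrow> (\<forall>x. 0 \<le> (\<Sum>j\<in>UNIV. D$j$k * exp (A j \<bullet> x)) + c$k * exp (A k \<bullet> x)))"
proof -
  define \<epsilon> where "\<epsilon> n = inverse (real (Suc n))" for n
  have "\<forall>n. \<exists>d :: real^'m^'m. (\<forall>j k. 0 \<le> d$j$k) \<and> (\<forall>j k. k \<in> E \<longrightarrow> d$j$k = 0)
     \<and> (\<forall>j k. j \<notin> E \<longrightarrow> d$j$k = 0) \<and> (\<forall>j\<in>E. (\<Sum>k\<in>UNIV. d$j$k) \<le> c$j + \<epsilon> n)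
     \<and> (\<forall>k. k \<notin> E \<longrightarrow> (\<forall>x. 0 \<le> (\<Sum>j\<in>UNIV. d$j$k * exp (A j \<bullet> x)) + c$k * exp (A k \<bullet> x)))"
    by (intro allI approx_decomp[OF lnn lz lsum lcomb lE cN G]) (simp add: \<epsilon>_def)
  then obtain d :: "nat \<Rightarrow> real^'m^'m" where dP: "\<forall>n. (\<forall>j k. 0 \<le> d n$j$k) \<and> (\<forall>j k. k \<in> E \<longrightarrow> d n$j$k = 0)
     \<and> (\<forall>j k. j \<notin> E \<longrightarrow> d n$j$k = 0) \<and> (\<forall>j\<in>E. (\<Sum>k\<in>UNIV. d n$j$k) \<le> c$j + \<epsilon> n)
     \<and> (\<forall>k. k \<notin> E \<longrightarrow> (\<forall>x. 0 \<le> (\<Sum>j\<in>UNIV. d n$j$k * exp (A j \<bullet> x)) + c$k * exp (A k \<bullet> x)))"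
    by (rule choice[THEN exE]) blast
  have
    p1: "\<And>n j k. 0 \<le> d n$j$k" and p2: "\<And>n j k. k \<in> E \<Longrightarrow> d n$j$k = 0"
    and p3: "\<And>n j k. j \<notin> E \<Longrightarrow> d n$j$k = 0"
    and p4: "\<And>n j. j \<in> E \<Longrightarrow> (\<Sum>k\<in>UNIV. d n$j$k) \<le> c$j + \<epsilon> n"
    and p5: "\<And>n k x. k \<notin> E \<Longrightarrow> 0 \<le> (\<Sum>j\<in>UNIV. d n$j$k * exp (A j \<bullet> x)) + c$k * exp (A k \<bullet> x)"
    using dP by blast+
  have eps1: "\<epsilon> n \<le> 1" for n by (simp add: \<epsilon>_def inverse_le_1_iff)
  have cb: "\<bar>d n$j$k\<bar> \<le> \<bar>c$j\<bar> + 1" for n j k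
  proof (cases "j \<in> E")
    case True
    have "d n$j$k \<le> (\<Sum>k\<in>UNIV. d n$j$k)" by (rule member_le_sum) (use p1 in auto)
    also have "\<dots> \<le> c$j + \<epsilon> n" using p4 True by auto
    finally show ?thesis using p1[of n j k] eps1[of n] by auto
  next
    case False then show ?thesis using p3 by auto
  qed
  have "bounded (range d)"
  proof -
    have "norm (d n) \<le> (\<Sum>j\<in>UNIV. \<Sum>k\<in>(UNIV::'m set). \<bar>c$j\<bar> + 1)" for n
    proof -
      have "norm (d n) \<le> (\<Sum>j\<in>UNIV. norm (d n $ j))" by (simp add: norm_vec_def L2_set_le_sum)
      also have "\<dots> \<le> (\<Sum>j\<in>UNIV. \<Sum>k\<in>UNIV. \<bar>d n$j$k\<bar>)" by (intro sum_mono norm_le_l1_cart)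
      also have "\<dots> \<le> (\<Sum>j\<in>UNIV. \<Sum>k\<in>(UNIV::'m set). \<bar>c$j\<bar> + 1)" by (intro sum_mono) (use cb in auto)
      finally show ?thesis .
    qed
    then show ?thesis unfolding bounded_iff by blast
  qed
  then obtain D r where r: "strict_mono r" and lim: "(d \<circ> r) \<longlonglongrightarrow> D"
    using bounded_imp_convergent_subsequence by blast
  have limc: "(\<lambda>n. d (r n)$j$k) \<longlonglongrightarrow> D$j$k" for j k
    using tendsto_vec_nth[OF tendsto_vec_nth[OF lim]] by (simp add: o_def)
  have q1: "0 \<le> D$j$k" for j k
    by (rule LIMSEQ_le_const[OF limc]) (use p1 in auto)
  have q2: "D$j$k = 0" if "k \<in> E" for j k
  proof -
    have "(\<lambda>n. d (r n)$j$k) = (\<lambda>n. 0)" using p2 that by auto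
    then show ?thesis using limc[of j k] by (simp add: LIMSEQ_const_iff)
  qed
  have q3: "D$j$k = 0" if "j \<notin> E" for j k
  proof -
    have "(\<lambda>n. d (r n)$j$k) = (\<lambda>n. 0)" using p3 that by auto
    then show ?thesis using limc[of j k] by (simp add: LIMSEQ_const_iff)
  qed
  have epslim: "(\<lambda>n. \<epsilon> (r n)) \<longlonglongrightarrow> 0"
    using LIMSEQ_subseq_LIMSEQ[OF LIMSEQ_inverse_real_of_nat r] by (simp add: \<epsilon>_def o_def)
  have q4: "(\<Sum>k\<in>UNIV. D$j$k) \<le> c$j" if "j \<in> E" for j
  proof (rule LIMSEQ_le)
    show "(\<lambda>n. \<Sum>k\<in>UNIV. d (r n)$j$k) \<longlonglongrightarrow> (\<Sum>k\<in>UNIV. D$j$k)"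
      by (intro tendsto_sum limc)
    show "(\<lambda>n. c$j + \<epsilon> (r n)) \<longlonglongrightarrow> c$j"
      using tendsto_add[OF tendsto_const epslim] by simp
    show "\<exists>N. \<forall>n\<ge>N. (\<Sum>k\<in>UNIV. d (r n)$j$k) \<le> c$j + \<epsilon> (r n)" using p4 that by blast
  qed
  have q5: "0 \<le> (\<Sum>j\<in>UNIV. D$j$k * exp (A j \<bullet> x)) + c$k * exp (A k \<bullet> x)" if "k \<notin> E" for k x
  proof (rule LIMSEQ_le_const)
    show "(\<lambda>n. (\<Sum>j\<in>UNIV. d (r n)$j$k * exp (A j \<bullet> x)) + c$k * exp (A k \<bullet> x)) \<longlonglongrightarrow>
       (\<Sum>j\<in>UNIV. D$j$k * exp (A j \<bullet> x)) + c$k * exp (A k \<bullet> x)"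
      by (intro tendsto_intros limc)
    show "\<exists>N. \<forall>n\<ge>N. 0 \<le> (\<Sum>j\<in>UNIV. d (r n)$j$k * exp (A j \<bullet> x)) + c$k * exp (A k \<bullet> x)"
      using p5 that by blast
  qed
  show ?thesis using q1 q2 q3 q4 q5 by blast
qed



theorem mainTheorem8:
  fixes A :: "'m::finite \<Rightarrow> real^'n" and c :: "real^'m"
  assumes "inj A"
    and "\<not> affine_dependent {x. x extreme_point_of New A}"
    and "\<forall>i. \<not> extremal A i \<longrightarrow> c $ i \<le> 0"
  shows "c \<in> C_SAGE A \<longleftrightarrow> c \<in> C_NNS A"
proof
  assume "c \<in> C_SAGE A"
  then obtain v where v: "\<forall>k. v k \<in> C_AGE A k" and cv: "c = (\<Sum>k\<in>UNIV. v k)"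
    unfolding C_SAGE_def by blast
  have "Sig A c x \<ge> 0" for x
  proof -
    have "Sig A c x = (\<Sum>k\<in>UNIV. Sig A (v k) x)"
      unfolding cv Sig_def by (simp add: sum_distrib_right) (rule sum.swap)
    also have "\<dots> \<ge> 0" using v by (intro sum_nonneg) (auto simp: C_AGE_def C_NNS_def)
    finally show ?thesis .
  qed
  then show "c \<in> C_NNS A" by (simp add: C_NNS_def)
next
  assume cN: "c \<in> C_NNS A"
  define E where "E = {j. extremal A j}"
  have ext: "{x. x extreme_point_of New A} = A ` E"
  proof
    show "{x. x extreme_point_of New A} \<subseteq> A ` E"
    proof
      fix x assume "x \<in> {x. x extreme_point_of New A}"
      then have xe: "x extreme_point_of New A" by simp
      then have "x \<in> range A" using extreme_point_of_convex_hull unfolding New_def by blast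
      then obtain j where "x = A j" by auto
      then show "x \<in> A ` E" using xe by (auto simp: E_def extremal_def)
    qed
    show "A ` E \<subseteq> {x. x extreme_point_of New A}" by (auto simp: E_def extremal_def)
  qed
  have indep: "\<not> affine_dependent (A ` E)" using assms(2) ext by simp
  have NewE: "New A = convex hull (A ` E)"
  proof -
    have "compact (New A)" unfolding New_def by (intro compact_convex_hull finite_imp_compact) auto
    moreover have "convex (New A)" unfolding New_def by simp
    ultimately show ?thesis using Krein_Milman_Minkowski ext by metis
  qed
  have "\<forall>i. \<exists>li. (\<forall>j. 0 \<le> li j) \<and> (\<forall>j. j \<notin> E \<longrightarrow> li j = 0) \<and> (\<Sum>j\<in>UNIV. li j) = 1
      \<and> (\<Sum>j\<in>UNIV. li j *\<^sub>R A j) = A i \<and> (i \<in> E \<longrightarrow> (\<forall>j. li j = (if j = i then 1 else 0)))"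
  proof
    fix i
    show "\<exists>li. (\<forall>j. 0 \<le> li j) \<and> (\<forall>j. j \<notin> E \<longrightarrow> li j = 0) \<and> (\<Sum>j\<in>UNIV. li j) = 1
      \<and> (\<Sum>j\<in>UNIV. li j *\<^sub>R A j) = A i \<and> (i \<in> E \<longrightarrow> (\<forall>j. li j = (if j = i then 1 else 0)))"
    proof (cases "i \<in> E")
      case True
      have "(\<Sum>j\<in>UNIV. (if j = i then 1 else 0) *\<^sub>R A j) = (\<Sum>j\<in>UNIV. if j = i then A i else 0)"
        by (rule sum.cong) auto
      then show ?thesis
        by (intro exI[of _ "\<lambda>j. if j = i then 1 else 0"]) (use True in auto)
    next
      case False
      have "A i \<in> New A" unfolding New_def by (simp add: hull_inc)
      then obtain u where u0: "\<forall>x\<in>A ` E. 0 \<le> u x" and u1: "sum u (A ` E) = 1"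
        and u2: "(\<Sum>x\<in>A ` E. u x *\<^sub>R x) = A i"
        using NewE convex_hull_finite[of "A ` E"] by auto
      have injE: "inj_on A E" using \<open>inj A\<close> by (simp add: inj_on_def inj_def)
      define li where "li j = (if j \<in> E then u (A j) else 0)" for j
      have s1: "(\<Sum>j\<in>UNIV. li j) = 1"
        using u1 by (simp add: li_def sum.inter_restrict[symmetric] sum.reindex[OF injE] if_distrib)
      have s2: "(\<Sum>j\<in>UNIV. li j *\<^sub>R A j) = A i"
      proof -
        have "(\<Sum>j\<in>UNIV. li j *\<^sub>R A j) = (\<Sum>j\<in>UNIV. if j \<in> E then u (A j) *\<^sub>R A j else 0)"
          by (intro sum.cong) (auto simp: li_def)
        also have "\<dots> = (\<Sum>j\<in>E. u (A j) *\<^sub>R A j)" by (simp add: sum.inter_restrict[symmetric])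
        also have "\<dots> = (\<Sum>x\<in>A ` E. u x *\<^sub>R x)" by (simp add: sum.reindex[OF injE])
        finally show ?thesis using u2 by simp
      qed
      show ?thesis
        by (rule exI[of _ li]) (use u0 s1 s2 False in \<open>auto simp: li_def\<close>)
    qed
  qed
  then obtain l where lP: "\<forall>i. (\<forall>j. 0 \<le> l i j) \<and> (\<forall>j. j \<notin> E \<longrightarrow> l i j = 0) \<and> (\<Sum>j\<in>UNIV. l i j) = 1
      \<and> (\<Sum>j\<in>UNIV. l i j *\<^sub>R A j) = A i \<and> (i \<in> E \<longrightarrow> (\<forall>j. l i j = (if j = i then 1 else 0)))"
    by (rule choice[THEN exE]) blast
  have lnn: "\<forall>i j. 0 \<le> l i j" and lz: "\<forall>i j. j \<notin> E \<longrightarrow> l i j = 0"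
    and lsum: "\<forall>i. (\<Sum>j\<in>UNIV. l i j) = 1" and lcomb: "\<forall>i. (\<Sum>j\<in>UNIV. l i j *\<^sub>R A j) = A i"
    and lE: "\<forall>i\<in>E. \<forall>j. l i j = (if j = i then 1 else 0)"
    using lP by blast+
  have cneg: "\<forall>k. k \<notin> E \<longrightarrow> c$k \<le> 0" using assms(3) by (simp add: E_def)
  have G: "\<forall>\<tau>::real^'m. 0 \<le> (\<Sum>i\<in>UNIV. c$i * exp (\<Sum>j\<in>UNIV. l i j * \<tau>$j))"
  proof
    fix \<tau> :: "real^'m"
    obtain x s where xs: "\<forall>j\<in>E. A j \<bullet> x + s = \<tau>$j"
      using surj_affine[OF \<open>inj A\<close> indep, of "\<lambda>j. \<tau>$j"] by blast
    have "(\<Sum>j\<in>UNIV. l i j * \<tau>$j) = A i \<bullet> x + s" for i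
    proof -
      have "(\<Sum>j\<in>UNIV. l i j * \<tau>$j) = (\<Sum>j\<in>UNIV. l i j * (A j \<bullet> x + s))"
        using xs lz by (intro sum.cong refl) (metis mult_zero_left)
      also have "\<dots> = (\<Sum>j\<in>UNIV. l i j *\<^sub>R A j) \<bullet> x + (\<Sum>j\<in>UNIV. l i j) * s"
        by (simp add: inner_sum_left distrib_left sum.distrib sum_distrib_right)
      also have "\<dots> = A i \<bullet> x + s" using lcomb lsum by simp
      finally show ?thesis .
    qed
    then have "(\<Sum>i\<in>UNIV. c$i * exp (\<Sum>j\<in>UNIV. l i j * \<tau>$j)) = exp s * Sig A c x"
      by (simp add: Sig_def exp_add sum_distrib_left algebra_simps)
    also have "\<dots> \<ge> 0" using cN by (simp add: C_NNS_def)
    finally show "0 \<le> (\<Sum>i\<in>UNIV. c$i * exp (\<Sum>j\<in>UNIV. l i j * \<tau>$j))" .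
  qed
  obtain D :: "real^'m^'m" where q1: "\<forall>j k. 0 \<le> D$j$k" and q2: "\<forall>j k. k \<in> E \<longrightarrow> D$j$k = 0"
     and q3: "\<forall>j k. j \<notin> E \<longrightarrow> D$j$k = 0" and q4: "\<forall>j\<in>E. (\<Sum>k\<in>UNIV. D$j$k) \<le> c$j"
     and q5: "\<forall>k. k \<notin> E \<longrightarrow> (\<forall>x. 0 \<le> (\<Sum>j\<in>UNIV. D$j$k * exp (A j \<bullet> x)) + c$k * exp (A k \<bullet> x))"
    using exact_decomp[OF lnn lz lsum lcomb lE cneg G] by blast
  define v where "v k = (\<chi> i. if i = k then (if k \<in> E then c$k - (\<Sum>k'\<in>UNIV. D$k$k') else c$k) else D$i$k)" for k
  have vAGE: "v k \<in> C_AGE A k" for k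
  proof -
    have off: "\<forall>i. i \<noteq> k \<longrightarrow> v k $ i \<ge> 0" using q1 by (simp add: v_def)
    have "Sig A (v k) x \<ge> 0" for x
    proof (cases "k \<in> E")
      case True
      then have "\<forall>i. v k $ i \<ge> 0" using off q4 by (auto simp: v_def)
      then show ?thesis unfolding Sig_def by (intro sum_nonneg mult_nonneg_nonneg) auto
    next
      case False
      have "Sig A (v k) x = (\<Sum>i\<in>UNIV. D$i$k * exp (A i \<bullet> x) + (if i = k then c$k * exp (A k \<bullet> x) else 0))"
        unfolding Sig_def using False q3 by (intro sum.cong) (auto simp: v_def)
      also have "\<dots> = (\<Sum>i\<in>UNIV. D$i$k * exp (A i \<bullet> x)) + c$k * exp (A k \<bullet> x)"
        by (simp add: sum.distrib)
      also have "\<dots> \<ge> 0" using q5 False by blast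
      finally show ?thesis .
    qed
    then show ?thesis using off by (auto simp: C_AGE_def C_NNS_def)
  qed
  have "c = (\<Sum>k\<in>UNIV. v k)"
  proof (subst vec_eq_iff, intro allI)
    fix i
    show "c$i = (\<Sum>k\<in>UNIV. v k) $ i"
    proof (cases "i \<in> E")
      case True
      have "(\<Sum>k\<in>UNIV. v k) $ i = (\<Sum>k\<in>UNIV. D$i$k + (if k = i then c$i - (\<Sum>k'\<in>UNIV. D$i$k') else 0))"
        unfolding sum_component using True q2 by (intro sum.cong) (auto simp: v_def)
      also have "\<dots> = c$i" by (simp add: sum.distrib)
      finally show ?thesis by simp
    next
      case False
      have "(\<Sum>k\<in>UNIV. v k) $ i = (\<Sum>k\<in>UNIV. if k = i then c$i else 0)"
        unfolding sum_component using False q3 by (intro sum.cong) (auto simp: v_def)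
      also have "\<dots> = c$i" by simp
      finally show ?thesis by simp
    qed
  qed
  then show "c \<in> C_SAGE A" unfolding C_SAGE_def using vAGE by blast
qed


end
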